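(* Let $\Omega$ be a simply connected domain containing $\mathbb{D}$, let $\lambda=\lambda(\Omega)$ be as defined in the context (assumed finite and positive), and let $m\ge1$ and $$P(w)=\sum_{j=1}^m k_jw^j,\qquad k_j=\left(\frac{1+\lambda}{1+2\lambda}\right)^{2j}.$$ If $f\in\mathcal{B}(\Omega)$ with $f(z)=\sum_{n=0}^\infty a_nz^n$ for $z\in\mathbb{D}$, then $$\sum_{n=0}^\infty|a_n|r^n+P\!\left(\frac{S_r}{\pi}\right)\le 1\quad\text{for } 0<r\le\frac{1}{1+2\lambda},$$ where $S_r$ is the area of the image of the disk $\{|z|<r\}$ under $f$. Equality at $r=1/(1+2\lambda)$ can only occur when $f$ is a unimodular constant.
   Context: $\mathbb{D}$ is the open unit disk; $\mathcal{B}(\Omega)$ is the class of analytic $f$ on $\Omega$ with $|f|<1$ on $\Omega$. $\lambda(\Omega)=\sup\{|a_n|/(1-|a_0|^2): n\ge1,\ f\in\mathcal{B}(\Omega)\text{ nonconstant},\ f(z)=\sum a_nz^n \text{ on }\mathbb{D}\}$, so that $|a_n|\le\lambda(1-|a_0|^2)$ for all $n\ge1$ and all $f\in\mathcal{B}(\Omega)$. Area is counted with multiplicity: $S_r=\iint_{|z|<r}|f'(z)|^2\,dx\,dy$. *)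

theory Defs
  imports "HOL-Complex_Analysis.Complex_Analysis"
begin

definition bounded_class :: "complex set \<Rightarrow> (complex \<Rightarrow> complex) set" where
  "bounded_class \<Omega> = {f. f holomorphic_on \<Omega> \<and> (\<forall>z\<in>\<Omega>. norm (f z) < 1)}"

definition taylor_coeff :: "(complex \<Rightarrow> complex) \<Rightarrow> nat \<Rightarrow> complex" where
  "taylor_coeff f n = (deriv ^^ n) f 0 / of_nat (fact n)"

definition bohr_lambda :: "complex set \<Rightarrow> real" where
  "bohr_lambda \<Omega> = Sup {norm (taylor_coeff f n) / (1 - (norm (taylor_coeff f 0))\<^sup>2) | f n.
       n \<ge> 1 \<and> f \<in> bounded_class \<Omega> \<and> \<not> (\<exists>c. \<forall>z\<in>\<Omega>. f z = c)}"

text \<open>S_r: area (with multiplicity) of the image of the disk |z| < r.\<close>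
definition area_image :: "(complex \<Rightarrow> complex) \<Rightarrow> real \<Rightarrow> real" where
  "area_image f r = integral (ball 0 r) (\<lambda>z. (norm (deriv f z))\<^sup>2)"

end

theory Submission
  imports Defs
begin
no_notation fps_nth (infixl "$" 75)
hide_const (open) Polynomial.content



definition cv :: "real^2 \<Rightarrow> complex" where "cv v = Complex (v$1) (v$2)"
definition dv :: "complex \<Rightarrow> real^2" where "dv z = vector [Re z, Im z]"

lemma dv_cv[simp]: "dv (cv x) = x"
  by (simp add: cv_def dv_def vec_eq_iff forall_2)
lemma cv_dv[simp]: "cv (dv z) = z"
  by (simp add: cv_def dv_def complex_eq_iff)
lemma linear_cv: "linear cv"
  by (rule linearI) (simp_all add: cv_def complex_eq_iff)
lemma linear_dv: "linear dv"
  by (rule linearI) (simp_all add: dv_def vec_eq_iff forall_2)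
lemma mem_cbox_complex: "(z::complex) \<in> cbox a b \<longleftrightarrow> Re a \<le> Re z \<and> Re z \<le> Re b \<and> Im a \<le> Im z \<and> Im z \<le> Im b"
  by (auto simp: mem_box Basis_complex_def)
lemma cv_cbox: "cv ` cbox u v = cbox (cv u) (cv v)"
proof -
  have "cv ` cbox u v = {z. dv z \<in> cbox u v}"
    by (auto simp: image_iff) (metis cv_dv)
  also have "\<dots> = cbox (cv u) (cv v)"
    by (auto simp: mem_cbox_complex mem_box_cart forall_2 dv_def cv_def)
  finally show ?thesis .
qed
lemma dv_cbox: "dv ` cbox u v = cbox (dv u) (dv v)"
proof -
  have "dv ` cbox u v = {z. cv z \<in> cbox u v}"
    by (auto simp: image_iff) (metis dv_cv)
  also have "\<dots> = cbox (dv u) (dv v)"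
    by (auto simp: mem_cbox_complex mem_box_cart forall_2 dv_def cv_def)
  finally show ?thesis .
qed
lemma content_cv_cbox: "content (cv ` cbox u v) = content (cbox u v)"
  unfolding cv_cbox
  by (simp add: content_cbox_cases Basis_complex_def cv_def UNIV_2 forall_2
      Basis_vec_def inner_axis axis_eq_axis mult.commute)

lemma content_dv_cbox: "content (dv ` cbox u v) = content (cbox u v)"
  unfolding dv_cbox
  by (simp add: content_cbox_cases Basis_complex_def dv_def UNIV_2 forall_2
      Basis_vec_def inner_axis axis_eq_axis mult.commute)

lemma tr_cv:
  fixes F :: "complex \<Rightarrow> real"
  assumes "(F has_integral b) S" "bounded S"
  shows "((\<lambda>v. F (cv v)) has_integral b) (dv ` S)"
proof -
  obtain a where aS: "S \<subseteq> cbox (-a) a" using bounded_subset_cbox_symmetric assms(2) by blast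
  have "((\<lambda>x. if x \<in> S then F x else 0) has_integral b) (cbox (-a) a)"
    using has_integral_restrict[OF aS] assms(1) by blast
  then have "((\<lambda>v. (\<lambda>x. if x \<in> S then F x else 0) (cv v)) has_integral (1/1) *\<^sub>R b) (dv ` cbox (-a) a)"
    apply (rule has_integral_twiddle[where g=cv and h=dv and r=1, rotated -1])
    using linear_continuous_at[OF linear_cv[unfolded linear_conv_bounded_linear]] cv_cbox dv_cbox content_cv_cbox by auto
  moreover have "(\<lambda>v. (\<lambda>x. if x \<in> S then F x else 0) (cv v)) = (\<lambda>v. if v \<in> dv ` S then F (cv v) else 0)"
    by (auto simp: fun_eq_iff image_iff)
  ultimately have "((\<lambda>v. if v \<in> dv ` S then F (cv v) else 0) has_integral b) (dv ` cbox (-a) a)" by simp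
  then show ?thesis
    using has_integral_restrict[of "dv ` S" "dv ` cbox (-a) a"] aS by blast
qed

lemma tr_dv:
  fixes G :: "real^2 \<Rightarrow> real"
  assumes "(G has_integral b) T" "bounded T"
  shows "((\<lambda>z. G (dv z)) has_integral b) (cv ` T)"
proof -
  obtain a where aS: "T \<subseteq> cbox (-a) a" using bounded_subset_cbox_symmetric assms(2) by blast
  have "((\<lambda>x. if x \<in> T then G x else 0) has_integral b) (cbox (-a) a)"
    using has_integral_restrict[OF aS] assms(1) by blast
  then have "((\<lambda>v. (\<lambda>x. if x \<in> T then G x else 0) (dv v)) has_integral (1/1) *\<^sub>R b) (cv ` cbox (-a) a)"
    apply (rule has_integral_twiddle[where g=dv and h=cv and r=1, rotated -1])
    using linear_continuous_at[OF linear_dv[unfolded linear_conv_bounded_linear]] cv_cbox dv_cbox content_dv_cbox by auto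
  moreover have "(\<lambda>v. (\<lambda>x. if x \<in> T then G x else 0) (dv v)) = (\<lambda>v. if v \<in> cv ` T then G (dv v) else 0)"
    by (auto simp: fun_eq_iff image_iff)
  ultimately have "((\<lambda>v. if v \<in> cv ` T then G (dv v) else 0) has_integral b) (cv ` cbox (-a) a)" by simp
  then show ?thesis
    using has_integral_restrict[of "cv ` T" "cv ` cbox (-a) a"] aS by blast
qed

lemma cv_add: "cv (x + y) = cv x + cv y" and cv_scale: "cv (c *\<^sub>R x) = c *\<^sub>R cv x"
  using linear_cv by (simp_all add: linear_add linear_scale)
lemma dv_add: "dv (x + y) = dv x + dv y" and dv_scale: "dv (c *\<^sub>R x) = c *\<^sub>R dv x"
  using linear_dv by (simp_all add: linear_add linear_scale)

lemma rot_inv: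
  fixes F :: "complex \<Rightarrow> real"
  assumes F: "(F has_integral b) (ball 0 r)" and nn: "\<And>z. z \<in> ball 0 r \<Longrightarrow> 0 \<le> F z"
    and w: "norm \<omega> = 1"
  shows "((\<lambda>z. F (\<omega> * z)) has_integral b) (ball 0 r)"
proof -
  define S where "S = dv ` ball 0 r"
  have bS: "bounded S" unfolding S_def
    using bounded_linear_image[OF bounded_ball linear_dv[unfolded linear_conv_bounded_linear]] by blast
  have 1: "((\<lambda>v. F (cv v)) has_integral b) S" unfolding S_def by (rule tr_cv[OF F bounded_ball])
  define R where "R v = dv (\<omega> * cv v)" for v
  define Ri where "Ri v = dv (cnj \<omega> * cv v)" for v
  have ww: "cnj \<omega> * \<omega> = 1" "\<omega> * cnj \<omega> = 1"
    using w complex_norm_square[of \<omega>] by (simp_all add: mult.commute)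
  have linR: "linear R"
    by (rule linearI) (simp_all add: R_def cv_add cv_scale dv_add dv_scale distrib_left mult_scaleR_right)
  have linRi: "linear Ri"
    by (rule linearI) (simp_all add: Ri_def cv_add cv_scale dv_add dv_scale distrib_left mult_scaleR_right)
  have memS: "v \<in> S \<longleftrightarrow> norm (cv v) < r" for v
    unfolding S_def by (auto simp: image_iff intro!: bexI[where x="cv v"])
  have detR: "det (matrix R) = 1"
  proof -
    have "det (matrix R) = Re \<omega> * Re \<omega> - (- Im \<omega>) * Im \<omega>"
      by (simp add: det_2 matrix_def R_def dv_def cv_def axis_def)
    also have "\<dots> = (norm \<omega>)^2" using cmod_power2[of \<omega>] by (simp add: power2_eq_square)
    finally show ?thesis using w by simp
  qed
  have "((\<lambda>x. \<bar>det (matrix ((\<lambda>_. R) x))\<bar> * (\<lambda>v. F (cv v)) (R x)) has_integral b) S \<longleftrightarrow>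
        ((\<lambda>v. F (cv v)) has_integral b) S"
  proof (rule cov_invertible_nonneg_eq[where h=Ri and h'="\<lambda>_. Ri"])
    show "(R has_derivative R) (at x within S)" for x using linR linear_imp_has_derivative by blast
    show "(Ri has_derivative Ri) (at x within S)" for x using linRi linear_imp_has_derivative by blast
    show "0 \<le> F (cv y)" if "y \<in> S" for y using nn memS that by simp
    show "R x \<in> S \<and> Ri (R x) = x" if "x \<in> S" for x
      using that w ww by (simp add: memS R_def Ri_def norm_mult mult.assoc[symmetric])
    show "Ri y \<in> S \<and> R (Ri y) = y" if "y \<in> S" for y
      using that w ww by (simp add: memS R_def Ri_def norm_mult mult.assoc[symmetric])
    show "Ri \<circ> R = id"
      using ww by (simp add: fun_eq_iff R_def Ri_def mult.assoc[symmetric])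
  qed
  with 1 have "((\<lambda>x. F (\<omega> * cv x)) has_integral b) S"
    by (simp add: detR R_def)
  from tr_dv[OF this bS] show ?thesis
    by (simp add: S_def image_image)
qed


lemma cont_integrable_ball:
  fixes g :: "complex \<Rightarrow> real"
  assumes "continuous_on (cball 0 \<rho>) g"
  shows "g integrable_on ball 0 \<rho>"
proof -
  obtain B where B: "\<And>x. x \<in> cball 0 \<rho> \<Longrightarrow> norm (g x) \<le> B"
    using compact_imp_bounded[OF compact_continuous_image[OF assms compact_cball]]
    unfolding bounded_iff by (auto simp: dist_norm) (meson mem_cball_0)
  show ?thesis
  proof (rule measurable_bounded_by_integrable_imp_integrable[where g="\<lambda>_. B"])
    show "g \<in> borel_measurable (lebesgue_on (ball 0 \<rho>))"
      by (rule continuous_imp_measurable_on_sets_lebesgue[OF continuous_on_subset[OF assms]])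
        (auto simp: fmeasurableD[OF lmeasurable_ball])
    show "(\<lambda>_. B) integrable_on ball 0 \<rho>" by (rule integrable_on_const[OF lmeasurable_ball])
    show "norm (g x) \<le> B" if "x \<in> ball 0 \<rho>" for x using B that by auto
    show "ball 0 \<rho> \<in> sets lebesgue" by (simp add: fmeasurableD[OF lmeasurable_ball])
  qed
qed

lemma scale_ball:
  fixes G :: "complex \<Rightarrow> real"
  assumes G: "(G has_integral b) (ball 0 \<rho>)" and r: "\<rho> > 0"
  shows "((\<lambda>w. G (\<rho> *\<^sub>R w)) has_integral b / \<rho>^2) (ball 0 1)"
proof -
  obtain a :: complex where aS: "ball 0 \<rho> \<subseteq> cbox (-a) a" using bounded_subset_cbox_symmetric bounded_ball by blast
  have "((\<lambda>x. if x \<in> ball 0 \<rho> then G x else 0) has_integral b) (cbox (-a) a)"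
    using has_integral_restrict[OF aS] G by blast
  from has_integral_affinity[OF this, of \<rho> 0] r
  have "((\<lambda>x. if \<rho> *\<^sub>R x + 0 \<in> ball 0 \<rho> then G (\<rho> *\<^sub>R x + 0) else 0) has_integral b / \<rho>^2)
      ((\<lambda>x. (1 / \<rho>) *\<^sub>R x) ` cbox (-a) a)"
    by (simp add: divide_inverse_commute)
  then have "((\<lambda>x. if \<rho> *\<^sub>R x \<in> ball 0 \<rho> then G (\<rho> *\<^sub>R x) else 0) has_integral b / \<rho>^2)
      ((\<lambda>x. (1 / \<rho>) *\<^sub>R x) ` cbox (-a) a)"
    unfolding add_0_right .
  moreover have "\<rho> *\<^sub>R x \<in> ball 0 \<rho> \<longleftrightarrow> x \<in> ball 0 1" for x :: complex
    using r by (simp add: dist_norm norm_scaleR)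
  ultimately have 1: "((\<lambda>x. if x \<in> ball 0 1 then G (\<rho> *\<^sub>R x) else 0) has_integral b / \<rho>^2)
      ((\<lambda>x. (1 / \<rho>) *\<^sub>R x) ` cbox (-a) a)" by simp
  have "ball 0 1 \<subseteq> (\<lambda>x. (1 / \<rho>) *\<^sub>R x) ` cbox (-a) a"
  proof
    fix x :: complex assume "x \<in> ball 0 1"
    then have "\<rho> *\<^sub>R x \<in> cbox (-a) a" using aS r by (auto simp: dist_norm norm_scaleR)
    moreover have "x = (1 / \<rho>) *\<^sub>R (\<rho> *\<^sub>R x)" using r by simp
    ultimately show "x \<in> (\<lambda>x. (1 / \<rho>) *\<^sub>R x) ` cbox (-a) a" by blast
  qed
  from has_integral_restrict[OF this] 1 show ?thesis by blast
qed

lemma content_ball_complex: "r \<ge> 0 \<Longrightarrow> content (ball (0::complex) r) = pi * r^2"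
  by (simp add: content_ball unit_ball_vol_2)

lemma ball_has_integral_1:
  "((\<lambda>x. 1) has_integral content (ball (c::complex) r)) (ball c r)"
  apply (rule has_integral_measure_lborel)
   apply simp
  using emeasure_bounded_finite[OF bounded_ball, of c r] by simp

lemma radial_int:
  fixes k :: nat
  shows "((\<lambda>z::complex. (cmod z)^(2*k)) has_integral integral (ball 0 \<rho>) (\<lambda>z::complex. (cmod z)^(2*k))) (ball 0 \<rho>)"
  by (intro integrable_integral cont_integrable_ball continuous_intros)

lemma radial_bound:
  fixes k :: nat and \<rho> :: real
  assumes r: "\<rho> > 0"
  shows "integral (ball 0 \<rho>) (\<lambda>z::complex. (cmod z)^(2*k)) \<le> pi * \<rho>^(2*k+2) / (k+1)"
proof -
  define P where "P z = (cmod z)^(2*k)" for z :: complex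
  define I where "I t = integral (ball 0 t) P" for t
  have PI: "(P has_integral I t) (ball 0 t)" for t
    unfolding P_def I_def by (rule radial_int)
  have scale: "I t = t^(2*k+2) * I 1" if t: "t > 0" for t
  proof -
    have "((\<lambda>w. P (t *\<^sub>R w)) has_integral I t / t^2) (ball 0 1)"
      by (rule scale_ball[OF PI t])
    moreover have "(\<lambda>w. P (t *\<^sub>R w)) = (\<lambda>w. t^(2*k) * P w)"
      using t by (auto simp: P_def fun_eq_iff norm_scaleR power_mult_distrib)
    ultimately have "((\<lambda>w. t^(2*k) * P w) has_integral I t / t^2) (ball 0 1)" by simp
    moreover have "((\<lambda>w. t^(2*k) * P w) has_integral t^(2*k) * I 1) (ball 0 1)"
      by (rule has_integral_mult_right[OF PI])
    ultimately have "I t / t^2 = t^(2*k) * I 1" by (rule has_integral_unique)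
    then show ?thesis using t by (simp add: field_simps power_add power2_eq_square)
  qed
  have ann: "I 1 \<le> I s + (pi - pi * s^2)" if s: "0 < s" "s < 1" for s
  proof -
    define A where "A w = (if w \<in> ball 0 s then P w else 0)" for w
    have sub: "ball (0::complex) s \<subseteq> ball 0 1" using s by auto
    have A: "(A has_integral I s) (ball 0 1)"
      unfolding A_def using has_integral_restrict[OF sub] PI by blast
    have B: "((\<lambda>w. P w - A w) has_integral I 1 - I s) (ball 0 1)"
      by (rule has_integral_diff[OF PI A])
    have E: "((\<lambda>w. 1 - (if w \<in> ball 0 s then 1 else 0)) has_integral pi - pi * s^2) (ball (0::complex) 1)"
    proof -
      have "((\<lambda>w::complex. if w \<in> ball 0 s then 1 else 0) has_integral content (ball (0::complex) s)) (ball 0 1)"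
        using has_integral_restrict[OF sub, of "\<lambda>_. 1::real"] ball_has_integral_1[of 0 s] by simp
      from has_integral_diff[OF ball_has_integral_1 this] show ?thesis
        using s by (simp add: content_ball_complex)
    qed
    have "I 1 - I s \<le> pi - pi * s^2"
    proof (rule has_integral_le[OF B E])
      fix w :: complex assume "w \<in> ball 0 1"
      then have "cmod w \<le> 1" by simp
      then have "P w \<le> 1" unfolding P_def by (simp add: power_le_one)
      then show "P w - A w \<le> 1 - (if w \<in> ball 0 s then 1 else 0)"
        by (simp add: A_def)
    qed
    then show ?thesis by simp
  qed
  have key: "I 1 * (\<Sum>j<k+1. (s^2)^j) \<le> pi" if s: "0 < s" "s < 1" for s
  proof -
    have "I 1 - s^(2*k+2) * I 1 \<le> pi - pi * s^2" using ann[OF s] scale[OF s(1)] by simp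
    moreover have e: "(s^2)^(k+1) = s^(2*k+2)"
      by (metis (no_types) add.commute mult.commute mult_2 power_add power_mult power_one_right add_Suc_right numeral_2_eq_2 Suc_eq_plus1 mult_Suc_right)
    ultimately have "I 1 * (1 - (s^2)^(k+1)) \<le> pi * (1 - s^2)"
      unfolding e by (simp add: algebra_simps)
    also have "1 - (s^2)^(k+1) = (1 - s^2) * (\<Sum>j<k+1. (s^2)^j)"
      by (rule one_diff_power_eq)
    finally have "(1 - s^2) * (I 1 * (\<Sum>j<k+1. (s^2)^j)) \<le> (1 - s^2) * pi"
      by (simp add: algebra_simps)
    moreover have "0 < 1 - s^2" using s by (simp add: abs_square_less_1)
    ultimately show ?thesis by simp
  qed
  have lim: "((\<lambda>s. I 1 * (\<Sum>j<k+1. (s^2)^j)) \<longlongrightarrow> I 1 * (\<Sum>j<k+1. ((1::real)^2)^j)) (at_left 1)"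
    by (intro tendsto_intros)
  have lim': "((\<lambda>s. I 1 * (\<Sum>j<k+1. (s^2)^j)) \<longlongrightarrow> I 1 * (k+1)) (at_left (1::real))"
    using lim by simp
  have "I 1 * (k+1) \<le> pi"
  proof (rule tendsto_upperbound[OF lim'])
    show "\<forall>\<^sub>F s in at_left 1. I 1 * (\<Sum>j<k+1. (s^2)^j) \<le> pi"
      using eventually_at_left_real[of 0 "1::real"] by (rule eventually_mono) (use key in auto)
  qed simp
  then have "I 1 \<le> pi / (k+1)" by (simp add: field_simps)
  then have "\<rho>^(2*k+2) * I 1 \<le> \<rho>^(2*k+2) * (pi / (k+1))"
    using r by (intro mult_left_mono) auto
  then show ?thesis using scale[OF r] unfolding I_def P_def by (simp add: mult.commute)
qed



lemma root_sum:
  fixes M k l :: nat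
  assumes M: "0 < M" and k: "k < M" and l: "l < M"
  defines "\<omega> \<equiv> exp (2 * complex_of_real pi * \<i> / of_nat M)"
  shows "(\<Sum>j<M. (\<omega>^k * cnj \<omega>^l)^j) = (if k = l then of_nat M else 0)"
proof -
  have pw: "\<omega>^d = exp (2 * complex_of_real pi * \<i> * of_nat d / of_nat M)" for d
    unfolding \<omega>_def by (simp add: exp_of_nat_mult[symmetric] mult.commute)
  have nw: "norm \<omega> = 1" unfolding \<omega>_def
    using norm_exp_i_times[of "2 * pi / M"] by (simp add: mult.commute)
  have cw: "cnj \<omega> = inverse \<omega>"
    using nw complex_norm_square[of \<omega>] by (metis inverse_unique of_real_1 power_one)
  have wnz: "\<omega> \<noteq> 0" using nw by auto
  have wM: "\<omega>^M = 1" using pw[of M] M by simp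
  have ne1: "\<omega>^d \<noteq> 1" if "0 < d" "d < M" for d
  proof
    assume "\<omega>^d = 1"
    then have "M dvd d" using complex_root_unity_eq_1[of M d] M pw[of d] by simp
    with that show False by (simp add: nat_dvd_not_less)
  qed
  show ?thesis
  proof (cases "k = l")
    case True
    then have "\<omega>^k * cnj \<omega>^l = 1" using cw wnz by (simp add: power_mult_distrib[symmetric])
    then show ?thesis using True by simp
  next
    case False
    define q where "q = \<omega>^k * cnj \<omega>^l"
    have qM: "q^M = 1"
    proof -
      have "q^M = (\<omega>^M)^k * inverse ((\<omega>^M)^l)"
        unfolding q_def cw power_mult_distrib
        by (simp only: power_mult[symmetric] mult.commute power_inverse)
      then show ?thesis using wM by simp
    qed
    have q1: "q \<noteq> 1"
    proof (cases "l < k")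
      case True
      have "q = \<omega>^(k - l)" unfolding q_def cw using True wnz
        by (simp add: power_diff power_inverse divide_inverse)
      then show ?thesis using ne1[of "k - l"] True k by simp
    next
      case False2: False
      with False have lk: "k < l" by simp
      have "q = inverse (\<omega>^(l - k))" unfolding q_def cw using lk wnz
        by (simp add: power_diff power_inverse divide_inverse)
      then show ?thesis using ne1[of "l - k"] lk l by auto
    qed
    have "(\<Sum>j<M. q^j) = 0" using q1 qM by (simp add: sum_gp_strict)
    then show ?thesis using False by (simp add: q_def)
  qed
qed

lemma pow_swap: "((\<omega>::complex)^j)^k = (\<omega>^k)^j" by (simp only: power_mult[symmetric] mult.commute)
lemma tm_expand: "(c k * ((\<omega>::complex)^j * z)^k) * cnj (c l * (\<omega>^j * z)^l) = (c k * cnj (c l) * z^k * cnj z^l) * (\<omega>^k * cnj \<omega>^l)^j"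
proof -
  have "(c k * ((\<omega>::complex)^j * z)^k) * cnj (c l * (\<omega>^j * z)^l) = c k * (\<omega>^k)^j * z^k * (cnj (c l) * (cnj \<omega>^l)^j * cnj z^l)"
    by (simp only: power_mult_distrib pow_swap complex_cnj_mult complex_cnj_power mult.assoc)
  also have "\<dots> = (c k * cnj (c l) * z^k * cnj z^l) * (\<omega>^k * cnj \<omega>^l)^j"
    by (simp only: power_mult_distrib mult_ac)
  finally show ?thesis .
qed

lemma disc_parseval:
  fixes c :: "nat \<Rightarrow> complex" and z :: complex and N M :: nat
  assumes NM: "N \<le> M" and M: "0 < M"
  defines "\<omega> \<equiv> exp (2 * complex_of_real pi * \<i> / of_nat M)"
  shows "(\<Sum>j<M. (cmod (\<Sum>k<N. c k * (\<omega>^j * z)^k))^2) = M * (\<Sum>k<N. (cmod (c k))^2 * (cmod z)^(2*k))"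
proof -
  have "complex_of_real (\<Sum>j<M. (cmod (\<Sum>k<N. c k * (\<omega>^j * z)^k))^2)
      = (\<Sum>j<M. (\<Sum>k<N. c k * (\<omega>^j * z)^k) * cnj (\<Sum>l<N. c l * (\<omega>^j * z)^l))"
    by (simp only: of_real_sum complex_norm_square)
  also have "\<dots> = (\<Sum>j<M. \<Sum>k<N. \<Sum>l<N. (c k * cnj (c l) * z^k * cnj z^l) * (\<omega>^k * cnj \<omega>^l)^j)"
    by (simp only: cnj_sum sum_product tm_expand)
  also have "\<dots> = (\<Sum>k<N. \<Sum>l<N. (c k * cnj (c l) * z^k * cnj z^l) * (\<Sum>j<M. (\<omega>^k * cnj \<omega>^l)^j))"
    by (simp add: sum_distrib_left sum.swap[of _ "{..<M}"])
  also have "\<dots> = (\<Sum>k<N. \<Sum>l<N. (c k * cnj (c l) * z^k * cnj z^l) * (if k = l then of_nat M else 0))"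
    by (intro sum.cong refl) (use NM M in \<open>simp add: root_sum \<omega>_def\<close>)
  also have "\<dots> = (\<Sum>k<N. (c k * cnj (c k) * z^k * cnj z^k) * of_nat M)"
    by (simp add: if_distrib cong: if_cong)
  also have "\<dots> = complex_of_real (M * (\<Sum>k<N. (cmod (c k))^2 * (cmod z)^(2*k)))"
  proof -
    have e: "c k * cnj (c k) * z^k * cnj z^k * of_nat M = complex_of_real (M * ((cmod (c k))^2 * (cmod z)^(2*k)))" for k
    proof -
      have "z^k * cnj z^k = complex_of_real ((cmod z)^(2*k))"
        by (simp only: power_mult_distrib[symmetric] complex_norm_square[symmetric] of_real_power power_mult)
      moreover have "c k * cnj (c k) = complex_of_real ((cmod (c k))^2)" by (simp only: complex_norm_square)
      ultimately show ?thesis by (simp only: mult.assoc of_real_mult of_real_of_nat_eq) (simp only: mult_ac)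
    qed
    show ?thesis by (simp only: e of_real_sum sum_distrib_left)
  qed
  finally show ?thesis by (simp only: of_real_eq_iff)
qed



lemma poly_area:
  fixes c :: "nat \<Rightarrow> complex" and N :: nat and r :: real
  assumes r: "r > 0"
  shows "integral (ball 0 r) (\<lambda>z. (cmod (\<Sum>k<N. c k * z^k))^2)
         \<le> (\<Sum>k<N. (cmod (c k))^2 * (pi * r^(2*k+2) / (k+1)))"
proof -
  define M where "M = N + 1"
  define \<omega> where "\<omega> = exp (2 * complex_of_real pi * \<i> / of_nat M)"
  define F where "F z = (cmod (\<Sum>k<N. c k * z^k))^2" for z
  define J where "J = integral (ball 0 r) F"
  have FJ: "(F has_integral J) (ball 0 r)"
    unfolding J_def F_def by (intro integrable_integral cont_integrable_ball continuous_intros)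
  have nw: "norm \<omega> = 1" unfolding \<omega>_def
    using norm_exp_i_times[of "2 * pi / M"] by (simp add: mult.commute)
  have rot: "((\<lambda>z. F (\<omega>^j * z)) has_integral J) (ball 0 r)" for j
    by (rule rot_inv[OF FJ]) (auto simp: F_def norm_power nw)
  have "((\<lambda>z. \<Sum>j<M. F (\<omega>^j * z)) has_integral (\<Sum>j<M. J)) (ball 0 r)"
    by (rule has_integral_sum) (auto intro: rot)
  moreover have "(\<lambda>z. \<Sum>j<M. F (\<omega>^j * z)) = (\<lambda>z. M * (\<Sum>k<N. (cmod (c k))^2 * (cmod z)^(2*k)))"
    unfolding F_def \<omega>_def by (rule ext, rule disc_parseval) (auto simp: M_def)
  ultimately have 1: "((\<lambda>z. M * (\<Sum>k<N. (cmod (c k))^2 * (cmod z)^(2*k))) has_integral M * J) (ball 0 r)"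
    by simp
  define I where "I k = integral (ball 0 r) (\<lambda>z::complex. (cmod z)^(2*k))" for k
  have "((\<lambda>z. \<Sum>k<N. (cmod (c k))^2 * (cmod z)^(2*k)) has_integral (\<Sum>k<N. (cmod (c k))^2 * I k)) (ball 0 r)"
    unfolding I_def by (intro has_integral_sum finite_lessThan has_integral_mult_right radial_int)
  from has_integral_mult_right[OF this, of "real M"]
  have 2: "((\<lambda>z. M * (\<Sum>k<N. (cmod (c k))^2 * (cmod z)^(2*k))) has_integral M * (\<Sum>k<N. (cmod (c k))^2 * I k)) (ball 0 r)" .
  have "M * J = M * (\<Sum>k<N. (cmod (c k))^2 * I k)" using has_integral_unique[OF 1 2] .
  then have "J = (\<Sum>k<N. (cmod (c k))^2 * I k)" by (simp add: M_def)
  also have "\<dots> \<le> (\<Sum>k<N. (cmod (c k))^2 * (pi * r^(2*k+2) / (k+1)))"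
    by (intro sum_mono mult_left_mono) (use radial_bound[OF r] in \<open>auto simp: I_def\<close>)
  finally show ?thesis unfolding J_def F_def .
qed


lemma k1_identity:
  fixes lam A :: real assumes lam: "lam > 0"
  shows "((1 + lam) / (1 + 2 * lam))^2 * ((lam * (1 - A^2))^2 * ((1 / (1 + 2 * lam))^2 / (1 - (1 / (1 + 2 * lam))^2)^2)) = (1 - A^2)^2 / 16"
proof -
  define d where "d = 1 + 2 * lam"
  have d: "d > 0" using lam by (simp add: d_def)
  have dd: "d^2 - 1 = 4*lam*(1+lam)" by (simp add: d_def power2_eq_square algebra_simps)
  have "1 - (1/d)^2 = (d^2 - 1)/d^2" using d by (simp add: field_simps)
  then have h1: "1 - (1/d)^2 = 4*lam*(1+lam)/d^2" using dd by simp
  have h2: "(1/d)^2 / (1 - (1/d)^2)^2 = d^2/(16*lam^2*(1+lam)^2)"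
    unfolding h1 using d lam by (simp add: field_simps power2_eq_square)
  have "(E / d)^2 * ((lam * B)^2 * (d^2/(16*lam^2*E^2))) = B^2 / 16" if "E > 0" for B E
    using d lam that by (simp add: field_simps power2_eq_square)
  from this[of "1 + lam" "1 - A^2"] lam have "((1 + lam) / d)^2 * ((lam * (1 - A^2))^2 * (d^2/(16*lam^2*(1+lam)^2))) = (1 - A^2)^2 / 16" by simp
  then show ?thesis using h2 by (simp add: d_def)
qed

lemma final_ineq:
  fixes A u :: real assumes A: "0 \<le> A" "A < 1" and u: "u = (1 - A^2)^2 / 16"
  shows "A + (1 - A^2)/2 + u/(1-u) < 1"
proof -
  have B: "0 \<le> 1 - A^2" "1 - A^2 \<le> 1" using A by (auto simp: abs_square_le_1)
  have u0: "0 \<le> u" unfolding u by simp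
  have "(1 - A^2)^2 \<le> 1" using B by (simp add: power_le_one)
  then have u1: "u \<le> 1/16" using u by simp
  have "(1 - A^2)^2 = (1 - A)^2 * (1 + A)^2" by (simp add: power2_eq_square algebra_simps)
  also have "\<dots> \<le> (1 - A)^2 * 4"
  proof (rule mult_left_mono)
    have "(1 + A)^2 \<le> 2^2" using A by (intro power_mono) auto
    then show "(1 + A)^2 \<le> 4" by simp
  qed simp
  finally have u2: "u \<le> (1 - A)^2 / 4" using u by simp
  have "u / (1 - u) \<le> u / (15/16)"
    using u0 u1 by (intro divide_left_mono) auto
  also have "\<dots> \<le> ((1 - A)^2 / 4) / (15/16)" using u2 by (intro divide_right_mono) auto
  also have "\<dots> < (1 - A)^2 / 2" using A by (simp add: field_simps)
  also have "(1 - A)^2 / 2 = 1 - A - (1 - A^2)/2" by (simp add: power2_eq_square field_simps)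
  finally show ?thesis by simp
qed

theorem theorem2p3:
  fixes \<Omega> :: "complex set" and f :: "complex \<Rightarrow> complex" and a :: "nat \<Rightarrow> complex"
    and m :: nat
  assumes "open \<Omega>" and "connected \<Omega>" and "simply_connected \<Omega>"
    and "ball 0 1 \<subseteq> \<Omega>"
    and "bdd_above {norm (taylor_coeff g n) / (1 - (norm (taylor_coeff g 0))\<^sup>2) | g n.
       n \<ge> 1 \<and> g \<in> bounded_class \<Omega> \<and> \<not> (\<exists>c. \<forall>z\<in>\<Omega>. g z = c)}"
    and "bohr_lambda \<Omega> > 0"
    and "m \<ge> 1"
    and "f \<in> bounded_class \<Omega>"
    and "\<forall>z\<in>ball 0 1. (\<lambda>n. a n * z ^ n) sums f z"
  shows "(\<forall>r. 0 < r \<and> r \<le> 1 / (1 + 2 * bohr_lambda \<Omega>) \<longrightarrow>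
            summable (\<lambda>n. norm (a n) * r ^ n) \<and>
            (\<Sum>n. norm (a n) * r ^ n)
              + (\<Sum>j=1..m. ((1 + bohr_lambda \<Omega>) / (1 + 2 * bohr_lambda \<Omega>)) ^ (2 * j)
                    * (area_image f r / pi) ^ j) \<le> 1)
       \<and> ((\<Sum>n. norm (a n) * (1 / (1 + 2 * bohr_lambda \<Omega>)) ^ n)
              + (\<Sum>j=1..m. ((1 + bohr_lambda \<Omega>) / (1 + 2 * bohr_lambda \<Omega>)) ^ (2 * j)
                    * (area_image f (1 / (1 + 2 * bohr_lambda \<Omega>)) / pi) ^ j) = 1
          \<longrightarrow> (\<exists>c. norm c = 1 \<and> (\<forall>z\<in>\<Omega>. f z = c)))"
proof -
  define lam where "lam = bohr_lambda \<Omega>"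
  have lam: "lam > 0" using assms(6) by (simp add: lam_def)
  define r0 where "r0 = 1 / (1 + 2 * lam)"
  have r0: "0 < r0" "r0 < 1" using lam by (auto simp: r0_def field_simps)
  have fhol: "f holomorphic_on \<Omega>" and flt: "\<And>z. z \<in> \<Omega> \<Longrightarrow> norm (f z) < 1"
    using assms(8) by (auto simp: bounded_class_def)
  have sums: "\<And>z. norm z < 1 \<Longrightarrow> (\<lambda>n. a n * z^n) sums f z"
    using assms(9) by auto
  have a0: "a 0 = f 0" using sums[of 0] by (simp add: powser_sums_zero_iff)
  define A where "A = cmod (a 0)"
  have A: "0 \<le> A" "A < 1"
  proof -
    have "0 \<in> \<Omega>" using assms(4) by auto
    then show "0 \<le> A" "A < 1" using flt[of 0] a0 by (auto simp: A_def)
  qed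
  have tc: "taylor_coeff f n = a n" for n
  proof -
    have "f has_fps_expansion Abs_fps a"
    proof (rule has_fps_expansionI)
      show "\<forall>\<^sub>F u in nhds 0. (\<lambda>n. fps_nth (Abs_fps a) n * u ^ n) sums f u"
        unfolding eventually_nhds
        by (intro exI[of _ "ball 0 1"]) (auto intro: sums)
    qed
    from fps_nth_fps_expansion[OF this, of n] show ?thesis
      by (simp add: taylor_coeff_def)
  qed
  define L where "L = lam * (1 - A^2)"
  have A2: "0 < 1 - A^2" using A by (simp add: abs_square_less_1)
  have L0: "0 \<le> L" using lam A2 by (simp add: L_def)
  have coef: "cmod (a n) \<le> L" if n: "n \<ge> 1" for n
  proof (cases "\<exists>c. \<forall>z\<in>\<Omega>. f z = c")
    case True
    then obtain c where c: "\<And>z. z \<in> \<Omega> \<Longrightarrow> f z = c" by blast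
    have "f has_fps_expansion fps_const c"
      unfolding has_fps_expansion_def
    proof
      show "0 < fps_conv_radius (fps_const c)" by simp
      show "\<forall>\<^sub>F z in nhds 0. eval_fps (fps_const c) z = f z"
        unfolding eventually_nhds
        by (intro exI[of _ "ball 0 1"]) (use assms(4) c in auto)
    qed
    from fps_nth_fps_expansion[OF this, of n] tc[of n] n have "a n = 0"
      by (simp add: taylor_coeff_def)
    then show ?thesis using L0 by simp
  next
    case False
    have "norm (taylor_coeff f n) / (1 - (norm (taylor_coeff f 0))\<^sup>2) \<le> lam"
      unfolding lam_def bohr_lambda_def
      by (rule cSup_upper[OF _ assms(5)]) (use False n assms(8) in blast)
    then have "cmod (a n) / (1 - A^2) \<le> lam" by (simp add: tc A_def)
    then show ?thesis using A2 by (simp add: L_def divide_le_eq)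
  qed
  have coef_all: "cmod (a n) \<le> 1 + L" for n
    using coef[of n] A L0 by (cases "n = 0") (auto simp: A_def)
  have ser: "summable (\<lambda>n. cmod (a n) * r^n) \<and> (\<Sum>n. cmod (a n) * r^n) \<le> A + L * (r / (1 - r))"
    if r: "0 < r" "r < 1" for r
  proof -
    have nr: "norm r < 1" using r by simp
    have sm: "summable (\<lambda>n. cmod (a n) * r^n)"
    proof (rule summable_comparison_test'[where g="\<lambda>n. (1 + L) * r^n" and N=0])
      show "summable (\<lambda>n. (1 + L) * r^n)" by (intro summable_mult summable_geometric nr)
      show "norm (cmod (a n) * r^n) \<le> (1 + L) * r^n" for n
        using coef_all[of n] r by (simp add: abs_mult mult_right_mono)
    qed
    have sm1: "summable (\<lambda>n. cmod (a (Suc n)) * r^(Suc n))"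
      using sm summable_Suc_iff[of "\<lambda>n. cmod (a n) * r^n"] by simp
    have gs: "(\<lambda>n. L * r^(Suc n)) sums (L * r * (1 / (1 - r)))"
      using sums_mult[OF geometric_sums[OF nr], of "L * r"] by (simp add: mult_ac)
    have "(\<Sum>n. cmod (a (Suc n)) * r^(Suc n)) \<le> (\<Sum>n. L * r^(Suc n))"
      by (rule suminf_le[OF _ sm1 sums_summable[OF gs]]) (use coef r in \<open>auto intro: mult_right_mono\<close>)
    also have "\<dots> = L * (r / (1 - r))" using sums_unique[OF gs] by simp
    finally have "(\<Sum>n. cmod (a (Suc n)) * r^(Suc n)) \<le> L * (r / (1 - r))" .
    moreover have "(\<Sum>n. cmod (a (Suc n)) * r^(Suc n)) = (\<Sum>n. cmod (a n) * r^n) - A"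
      using suminf_split_head[OF sm] by (simp add: A_def)
    ultimately show ?thesis using sm by simp
  qed
  define c where "c = diffs a"
  have summ: "summable (\<lambda>n. a n * z^n)" if "norm z < 1" for z
    using sums[OF that] by (rule sums_summable)
  have dsums: "(\<lambda>n. c n * z^n) sums deriv f z" if z: "norm z < 1" for z
  proof -
    have "((\<lambda>z. \<Sum>n. a n * z^n) has_field_derivative (\<Sum>n. diffs a n * z^n)) (at z)"
      by (rule termdiffs_strong'[OF summ z])
    then have "(f has_field_derivative (\<Sum>n. diffs a n * z^n)) (at z)"
      by (rule has_field_derivative_transform_within_open[where S="ball 0 1"])
         (use z sums_unique[OF sums] in auto)
    then have "deriv f z = (\<Sum>n. c n * z^n)" unfolding c_def by (rule DERIV_imp_deriv)
    moreover have "summable (\<lambda>n. c n * z^n)" unfolding c_def by (rule termdiff_converges[OF z summ])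
    ultimately show ?thesis by (simp add: summable_sums)
  qed
  have cbound: "cmod (c k) \<le> (k+1) * L" for k
  proof -
    have "cmod (c k) = (k+1) * cmod (a (Suc k))"
      unfolding c_def diffs_def norm_mult by (metis norm_of_nat Suc_eq_plus1 of_nat_Suc add.commute)
    then show ?thesis using coef[of "Suc k"] mult_left_mono[of "cmod (a (Suc k))" L "real k + 1"]
      by (simp add: add.commute)
  qed
  have area: "area_image f r \<le> pi * (L^2 * (r^2 / (1 - r^2)^2))" if r: "0 < r" "r < 1" for r
  proof -
    define fN where "fN N z = (cmod (\<Sum>k<N. c k * z^k))^2" for N z
    define g where "g z = (cmod (deriv f z))^2" for z
    define K where "K = L / (1 - r)^2"
    have geo: "(\<lambda>n. of_nat (Suc n) * r^n) sums (1 / (1 - r)^2)"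
      using geometric_deriv_sums[of r] r by simp
    have pbound: "cmod (\<Sum>k<N. c k * z^k) \<le> K" if z: "z \<in> ball 0 r" for N z
    proof -
      have "cmod (\<Sum>k<N. c k * z^k) \<le> (\<Sum>k<N. cmod (c k) * cmod z ^ k)"
        by (rule order_trans[OF norm_sum]) (simp add: norm_mult norm_power)
      also have "\<dots> \<le> (\<Sum>k<N. L * (of_nat (Suc k) * r^k))"
      proof (intro sum_mono)
        fix k
        have "cmod z ^ k \<le> r ^ k" using z by (intro power_mono) auto
        from mult_mono[OF cbound[of k] this] L0
        show "cmod (c k) * cmod z ^ k \<le> L * (of_nat (Suc k) * r^k)" by (simp add: mult_ac add.commute)
      qed
      also have "\<dots> = L * (\<Sum>k<N. of_nat (Suc k) * r^k)" by (simp add: sum_distrib_left)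
      also have "\<dots> \<le> L * (1 / (1 - r)^2)"
        using sum_le_suminf[OF sums_summable[OF geo], of "{..<N}"] sums_unique[OF geo] r L0
        by (intro mult_left_mono) auto
      finally show ?thesis by (simp add: K_def)
    qed
    have lim: "(\<lambda>N. integral (ball 0 r) (fN N)) \<longlonglongrightarrow> integral (ball 0 r) g"
    proof (rule dominated_convergence(2)[where h="\<lambda>_. K^2"])
      show "fN N integrable_on ball 0 r" for N
        unfolding fN_def by (intro cont_integrable_ball continuous_intros)
      show "(\<lambda>_. K^2) integrable_on ball 0 r" by (rule integrable_on_const[OF lmeasurable_ball])
      show "norm (fN N z) \<le> K^2" if "z \<in> ball 0 r" for N z
        using pbound[OF that, of N] unfolding fN_def by (simp add: power_mono)
      show "(\<lambda>N. fN N z) \<longlonglongrightarrow> g z" if "z \<in> ball 0 r" for z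
      proof -
        have "norm z < 1" using that r by simp
        from dsums[OF this] have "(\<lambda>N. \<Sum>k<N. c k * z^k) \<longlonglongrightarrow> deriv f z" by (simp add: sums_def)
        then show ?thesis unfolding fN_def g_def by (intro tendsto_intros)
      qed
    qed
    have geo2: "(\<lambda>n. of_nat (Suc n) * (r^2)^n) sums (1 / (1 - r^2)^2)"
      using geometric_deriv_sums[of "r^2"] r by (simp add: abs_square_less_1)
    have bnd: "integral (ball 0 r) (fN N) \<le> pi * (L^2 * (r^2 / (1 - r^2)^2))" for N
    proof -
      have "integral (ball 0 r) (fN N) \<le> (\<Sum>k<N. (cmod (c k))^2 * (pi * r^(2*k+2) / (k+1)))"
        unfolding fN_def by (rule poly_area[OF r(1)])
      also have "\<dots> \<le> (\<Sum>k<N. pi * (L^2 * r^2) * (of_nat (Suc k) * (r^2)^k))"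
      proof (intro sum_mono)
        fix k
        have e: "r^(2*k+2) = r^2 * r^(2*k)" by (simp add: power_add power2_eq_square)
        have e': "(r^2)^k = r^(2*k)" by (simp add: power_mult)
        have "(cmod (c k))^2 \<le> ((k+1)*L)^2" using power_mono[OF cbound[of k] norm_ge_zero, of 2] by (simp add: add.commute)
        then have "(cmod (c k))^2 * (pi * r^(2*k+2) / (k+1)) \<le> ((k+1)*L)^2 * (pi * r^(2*k+2) / (k+1))"
          by (rule mult_right_mono) (use r in simp)
        also have "\<dots> = pi * (L^2 * r^2) * (of_nat (Suc k) * (r^2)^k)"
          unfolding e e' by (simp add: field_simps power2_eq_square)
        finally show "(cmod (c k))^2 * (pi * r^(2*k+2) / (k+1)) \<le> pi * (L^2 * r^2) * (of_nat (Suc k) * (r^2)^k)" .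
      qed
      also have "\<dots> = pi * (L^2 * r^2) * (\<Sum>k<N. of_nat (Suc k) * (r^2)^k)" by (simp add: sum_distrib_left)
      also have "\<dots> \<le> pi * (L^2 * r^2) * (1 / (1 - r^2)^2)"
        using sum_le_suminf[OF sums_summable[OF geo2], of "{..<N}"] sums_unique[OF geo2]
        by (intro mult_left_mono) auto
      finally show ?thesis by simp
    qed
    have "integral (ball 0 r) g \<le> pi * (L^2 * (r^2 / (1 - r^2)^2))"
      using LIMSEQ_le_const2[OF lim] bnd by blast
    then show ?thesis by (simp add: area_image_def g_def[abs_def])
  qed
  have area0: "0 \<le> area_image f r" for r
    unfolding area_image_def
    by (cases "(\<lambda>z. (cmod (deriv f z))\<^sup>2) integrable_on ball 0 r")
       (auto intro: integral_nonneg simp: not_integrable_integral)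
  define k1 where "k1 = ((1 + lam) / (1 + 2 * lam))^2"
  define u where "u = (1 - A^2)^2 / 16"
  have main: "summable (\<lambda>n. norm (a n) * r ^ n) \<and>
      (\<Sum>n. norm (a n) * r ^ n) + (\<Sum>j=1..m. ((1 + lam) / (1 + 2 * lam)) ^ (2 * j) * (area_image f r / pi) ^ j) < 1"
    if r: "0 < r" "r \<le> r0" for r
  proof -
    have r1: "r < 1" using r r0 by simp
    from ser[OF r(1) r1] have sm: "summable (\<lambda>n. cmod (a n) * r^n)"
      and S1: "(\<Sum>n. cmod (a n) * r^n) \<le> A + L * (r / (1 - r))" by auto
    have "r / (1 - r) \<le> r0 / (1 - r0)"
      using r r0 by (intro frac_le) auto
    also have "r0 / (1 - r0) = 1 / (2 * lam)" using lam by (simp add: r0_def field_simps)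
    finally have "L * (r / (1 - r)) \<le> L * (1 / (2 * lam))" using L0 by (intro mult_left_mono)
    also have "\<dots> = (1 - A^2) / 2" using lam by (simp add: L_def)
    finally have "L * (r / (1 - r)) \<le> (1 - A^2) / 2" .
    then have S2: "(\<Sum>n. cmod (a n) * r^n) \<le> A + (1 - A^2) / 2" using S1 by linarith
    define t where "t = area_image f r / pi"
    have t0: "0 \<le> t" using area0[of r] by (simp add: t_def)
    have "t \<le> L^2 * (r^2 / (1 - r^2)^2)" using area[OF r(1) r1] by (simp add: t_def field_simps)
    also have "\<dots> \<le> L^2 * (r0^2 / (1 - r0^2)^2)"
    proof (intro mult_left_mono frac_le)
      show "r^2 \<le> r0^2" using r by (intro power_mono) auto
      have "r0^2 < 1" using r0 by (simp add: abs_square_less_1)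
      then show "0 < (1 - r0^2)^2" by simp
      have "r^2 \<le> r0^2" using r by (intro power_mono) auto
      then show "(1 - r0^2)^2 \<le> (1 - r^2)^2" using \<open>r0^2 < 1\<close> by (intro power_mono) auto
    qed auto
    finally have tle: "t \<le> L^2 * (r0^2 / (1 - r0^2)^2)" .
    have k10: "0 \<le> k1" by (simp add: k1_def)
    have "k1 * t \<le> k1 * (L^2 * (r0^2 / (1 - r0^2)^2))" using tle k10 by (rule mult_left_mono)
    also have "\<dots> = u" unfolding k1_def u_def L_def r0_def by (rule k1_identity[OF lam])
    finally have kt: "k1 * t \<le> u" .
    have u0: "0 \<le> u" by (simp add: u_def)
    have u1: "u < 1"
    proof -
      have "(1 - A^2)^2 \<le> 1" using A2 A by (intro power_le_one) (auto simp: abs_square_le_1)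
      then show ?thesis by (simp add: u_def)
    qed
    have P: "(\<Sum>j=1..m. ((1 + lam) / (1 + 2 * lam)) ^ (2 * j) * t ^ j) \<le> (\<Sum>j=1..m. u^j)"
    proof (rule sum_mono)
      fix j
      have "((1 + lam) / (1 + 2 * lam)) ^ (2 * j) * t ^ j = (k1 * t)^j"
        by (simp add: k1_def power_mult power_mult_distrib)
      also have "\<dots> \<le> u^j" using kt k10 t0 by (intro power_mono) auto
      finally show "((1 + lam) / (1 + 2 * lam)) ^ (2 * j) * t ^ j \<le> u^j" .
    qed
    have gu: "(\<lambda>i. u^(Suc i)) sums (u * (1 / (1 - u)))"
      using sums_mult[OF geometric_sums[of u], of u] u0 u1 by simp
    have "(\<Sum>j=1..m. u^j) = (\<Sum>i<m. u^(Suc i))" by (simp add: sum.atLeast1_atMost_eq)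
    also have "\<dots> \<le> u * (1 / (1 - u))"
      using sum_le_suminf[OF sums_summable[OF gu], of "{..<m}"] sums_unique[OF gu] u0 by simp
    finally have G: "(\<Sum>j=1..m. u^j) \<le> u / (1 - u)" by simp
    have "A + (1 - A^2)/2 + u/(1-u) < 1" by (rule final_ineq[OF A u_def])
    with S2 P G sm show ?thesis unfolding t_def by simp
  qed
  show ?thesis
    unfolding lam_def[symmetric]
  proof (intro conjI allI impI)
    fix r assume "0 < r \<and> r \<le> 1 / (1 + 2 * lam)"
    then have rr: "0 < r" "r \<le> r0" by (auto simp: r0_def)
    from main[OF rr] show "summable (\<lambda>n. norm (a n) * r ^ n)" by blast
  next
    fix r assume "0 < r \<and> r \<le> 1 / (1 + 2 * lam)"
    then have rr: "0 < r" "r \<le> r0" by (auto simp: r0_def)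
    from main[OF rr] show "(\<Sum>n. norm (a n) * r ^ n)
              + (\<Sum>j=1..m. ((1 + lam) / (1 + 2 * lam)) ^ (2 * j)
                    * (area_image f r / pi) ^ j) \<le> 1" by linarith
  next
    assume eq: "(\<Sum>n. norm (a n) * (1 / (1 + 2 * lam)) ^ n)
              + (\<Sum>j=1..m. ((1 + lam) / (1 + 2 * lam)) ^ (2 * j)
                    * (area_image f (1 / (1 + 2 * lam)) / pi) ^ j) = 1"
    have "(\<Sum>n. norm (a n) * r0 ^ n)
              + (\<Sum>j=1..m. ((1 + lam) / (1 + 2 * lam)) ^ (2 * j)
                    * (area_image f r0 / pi) ^ j) < 1" using main[OF r0(1) order_refl] by blast
    with eq show "\<exists>c. norm c = 1 \<and> (\<forall>z\<in>\<Omega>. f z = c)" by (simp add: r0_def)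
  qed
qed

end
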